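(* Let $a<b$ and let $f:[a,b]\rightarrow\mathbb{R}$ be an absolutely continuous mapping with $f'\in L^2[a,b]$, and let $\sigma(f')=\|f'\|_2^2-\frac{(f(b)-f(a))^2}{b-a}$. Assume additionally that $f(a+b-x)=f(x)$ for all $x\in[a,b]$. Then for all $x\in[a,\frac{a+b}{2}]$, \[ \left|f(x)-\frac{1}{b-a}\int_{a}^{b}f(t)\,dt\right|\leq (b-a)^{-1/2} \left[\frac{(b-a)^2}{48}+\left(x-\frac{3a+b}{4}\right)^2\right]^{1/2}\sqrt{\sigma(f')}. \]
   Context: $\|g\|_2=\left(\int_a^b g(t)^2\,dt\right)^{1/2}$. *)

theory Defs
  imports "HOL-Analysis.Analysis"
begin

definition absolutely_continuous_on :: "real \<Rightarrow> real \<Rightarrow> (real \<Rightarrow> real) \<Rightarrow> bool" where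
  "absolutely_continuous_on a b f \<longleftrightarrow>
     (\<forall>\<epsilon>>0. \<exists>\<delta>>0. \<forall>(n::nat) (u::nat \<Rightarrow> real) (v::nat \<Rightarrow> real).
        (\<forall>i<n. a \<le> u i \<and> u i \<le> v i \<and> v i \<le> b) \<and>
        (\<forall>i<n. \<forall>j<n. i \<noteq> j \<longrightarrow> {u i<..<v i} \<inter> {u j<..<v j} = {}) \<and>
        (\<Sum>i<n. v i - u i) < \<delta>
        \<longrightarrow> (\<Sum>i<n. \<bar>f (v i) - f (u i)\<bar>) < \<epsilon>)"

end

theory Submission
  imports Defs
begin

lemma ac_continuous:
  assumes "absolutely_continuous_on a b f"
  shows "continuous_on {a..b} f"
  unfolding continuous_on_iff
proof (intro ballI allI impI)
  fix x e :: real assume x: "x \<in> {a..b}" and e: "0 < e"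
  from assms[unfolded absolutely_continuous_on_def, rule_format, OF e]
  obtain d where d: "d > 0" and H: "\<forall>(n::nat) (u::nat \<Rightarrow> real) (v::nat \<Rightarrow> real). (\<forall>i<n. a \<le> u i \<and> u i \<le> v i \<and> v i \<le> b) \<and>
        (\<forall>i<n. \<forall>j<n. i \<noteq> j \<longrightarrow> {u i<..<v i} \<inter> {u j<..<v j} = {}) \<and>
        (\<Sum>i<n. v i - u i) < d \<longrightarrow> (\<Sum>i<n. \<bar>f (v i) - f (u i)\<bar>) < e"
    by blast
  show "\<exists>d>0. \<forall>x'\<in>{a..b}. dist x' x < d \<longrightarrow> dist (f x') (f x) < e"
  proof (intro exI[of _ d] conjI ballI impI)
    fix y assume y: "y \<in> {a..b}" and dy: "dist y x < d"
    have 1: "(\<forall>i<1. a \<le> min x y \<and> min x y \<le> max x y \<and> max x y \<le> b)" using x y by auto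
    have 2: "(\<Sum>i<(1::nat). max x y - min x y) < d" using dy by (simp add: dist_real_def)
    have 3: "\<forall>i<(1::nat). \<forall>j<1. i \<noteq> j \<longrightarrow> {min x y<..<max x y} \<inter> {min x y<..<max x y} = {}" by auto
    have "(\<Sum>i<(1::nat). \<bar>f (max x y) - f (min x y)\<bar>) < e"
      using H[rule_format, of 1 "\<lambda>_. min x y" "\<lambda>_. max x y", OF conjI[OF 1 conjI[OF 3 2]]] by simp
    then show "dist (f y) (f x) < e"
      by (cases "x \<le> y") (auto simp: dist_real_def max_def min_def abs_minus_commute)
  qed (use d in auto)
qed

lemma tag_interval:
  assumes "p tagged_division_of {a..b::real}" "(x,K) \<in> p"
  shows "K = {Inf K..Sup K}" "Inf K \<le> x" "x \<le> Sup K" "a \<le> Inf K" "Sup K \<le> b"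
    "measure lborel K = Sup K - Inf K" "interior K = {Inf K<..<Sup K}"
proof -
  obtain u v where K: "K = cbox u v" using tagged_division_ofD(4)[OF assms] by blast
  have xK: "x \<in> K" using tagged_division_ofD(2)[OF assms] .
  have sub: "K \<subseteq> {a..b}" using tagged_division_ofD(3)[OF assms] .
  from K xK have uv: "u \<le> v" "K = {u..v}" by auto
  have IS: "Inf K = u" "Sup K = v" using uv by simp_all
  show "K = {Inf K..Sup K}" using uv IS by simp
  show "Inf K \<le> x" "x \<le> Sup K" using uv IS xK by simp_all
  show "a \<le> Inf K" "Sup K \<le> b" using uv IS sub by auto
  show "measure lborel K = Sup K - Inf K" using uv IS by simp
  show "interior K = {Inf K<..<Sup K}" using uv IS by simp
qed

lemma ftc_ac:
  fixes h h' f :: "real \<Rightarrow> real"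
  assumes ab: "a \<le> b" and ac: "absolutely_continuous_on a b f" and N: "negligible N"
    and der: "\<And>t. t \<in> {a..b} - N \<Longrightarrow> (h has_real_derivative h' t) (at t)"
    and bnd: "\<And>u v. a \<le> u \<Longrightarrow> u \<le> v \<Longrightarrow> v \<le> b \<Longrightarrow> \<bar>h v - h u\<bar> \<le> A*(v-u) + B*\<bar>f v - f u\<bar>"
    and A: "A \<ge> 0" and B: "B \<ge> 0"
  shows "(h' has_integral (h b - h a)) {a..b}"
proof -
  define g where "g t = (if t \<in> N then 0 else h' t)" for t
  have "(g has_integral (h b - h a)) {a..b}"
    unfolding has_integral_real
  proof (intro allI impI)
    fix e :: real assume e: "e > 0"
    have eB: "e/(2*(B+1)) > 0" using e B by simp
    from ac[unfolded absolutely_continuous_on_def, rule_format, OF eB]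
    obtain \<delta>1 where \<delta>1: "\<delta>1 > 0" and acd0: "\<forall>(n::nat) (u::nat \<Rightarrow> real) (v::nat \<Rightarrow> real). (\<forall>i<n. a \<le> u i \<and> u i \<le> v i \<and> v i \<le> b) \<and>
        (\<forall>i<n. \<forall>j<n. i \<noteq> j \<longrightarrow> {u i<..<v i} \<inter> {u j<..<v j} = {}) \<and>
        (\<Sum>i<n. v i - u i) < \<delta>1 \<longrightarrow> (\<Sum>i<n. \<bar>f (v i) - f (u i)\<bar>) < e/(2*(B+1))"
      by blast
    note acd = acd0[rule_format]
    define \<delta> where "\<delta> = min \<delta>1 (e/(4*(A+1)))"
    have \<delta>: "\<delta> > 0" using \<delta>1 e A by (simp add: \<delta>_def)
    have Nl: "N \<in> sets lebesgue" using N negligible_imp_sets by blast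
    obtain G where G: "open G" "N \<subseteq> G" "(G - N) \<in> lmeasurable" "emeasure lebesgue (G - N) < ennreal \<delta>"
      using sets_lebesgue_outer_open[OF Nl \<delta>] by blast
    have Nlm: "N \<in> lmeasurable" and N0: "measure lebesgue N = 0"
      using N negligible_imp_measurable negligible_imp_measure0 by blast+
    have GU: "G = (G - N) \<union> N" using G by blast
    have Glm: "G \<in> lmeasurable" using G(3) Nlm GU by (metis fmeasurable.Un)
    have "measure lebesgue (G - N) < \<delta>"
      using G(3,4) \<delta> by (simp add: emeasure_eq_measure2 ennreal_less_iff)
    then have Gm: "measure lebesgue G < \<delta>"
      using measure_Un_le[of "G - N" lebesgue N] G(3) Nlm N0 GU by (simp add: fmeasurable_def)
    define \<eta> where "\<eta> = e/(4*(b-a+1))"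
    have \<eta>: "\<eta> > 0" using e ab by (simp add: \<eta>_def)
    have "\<exists>d>0. (t \<in> {a..b} - N \<longrightarrow> (\<forall>y. \<bar>y - t\<bar> < d \<longrightarrow> \<bar>h y - h t - (y - t) * h' t\<bar> \<le> \<eta> * \<bar>y - t\<bar>))
               \<and> (t \<in> N \<longrightarrow> ball t d \<subseteq> G)" for t
    proof (cases "t \<in> N")
      case True
      then obtain d where "d > 0" "ball t d \<subseteq> G" using G(1,2) open_contains_ball by blast
      then show ?thesis using True by auto
    next
      case False
      show ?thesis
      proof (cases "t \<in> {a..b}")
        case True
        with False have "(h has_real_derivative h' t) (at t)" using der by blast
        then have "(h has_derivative (\<lambda>x. x * h' t)) (at t within UNIV)"
          by (simp add: has_field_derivative_def mult_commute_abs)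
        then obtain d where "d > 0" and d: "\<forall>y\<in>UNIV. norm (y - t) < d \<longrightarrow> norm (h y - h t - (y - t) * h' t) \<le> \<eta> * norm (y - t)"
          using \<eta> unfolding has_derivative_within_alt by blast
        then show ?thesis using False by (intro exI[of _ d]) auto
      next
        case False2: False
        show ?thesis using False False2 by (intro exI[of _ 1]) auto
      qed
    qed
    then obtain d where d: "\<And>t. d t > 0"
      and dder: "\<And>t y. t \<in> {a..b} - N \<Longrightarrow> \<bar>y - t\<bar> < d t \<Longrightarrow> \<bar>h y - h t - (y - t) * h' t\<bar> \<le> \<eta> * \<bar>y - t\<bar>"
      and dG: "\<And>t. t \<in> N \<Longrightarrow> ball t (d t) \<subseteq> G"
      by metis
    show "\<exists>\<gamma>. gauge \<gamma> \<and> (\<forall>\<D>. \<D> tagged_division_of {a..b} \<and> \<gamma> fine \<D> \<longrightarrow>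
        norm (sum (\<lambda>(x,k). measure lborel k *\<^sub>R g x) \<D> - (h b - h a)) < e)"
    proof (intro exI[of _ "\<lambda>t. ball t (d t)"] conjI allI impI)
      show "gauge (\<lambda>t. ball t (d t))" using d by (simp add: gauge_ball_dependent)
    next
      fix p assume pp: "p tagged_division_of {a..b} \<and> (\<lambda>t. ball t (d t)) fine p"
      then have p: "p tagged_division_of {a..b}" and fine: "(\<lambda>t. ball t (d t)) fine p" by auto
      have finp: "finite p" using p by blast
      define T where "T z = (case z of (x,K) \<Rightarrow> measure lborel K * g x - (h (Sup K) - h (Inf K)))" for z
      have "sum (\<lambda>(x,k). measure lborel k *\<^sub>R g x) p - (h b - h a) = sum T p"
        using additive_tagged_division_1[OF ab p, of h]
        by (simp add: T_def sum_subtractf split_def)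
      also have "\<dots> = sum T (p \<inter> {z. fst z \<in> N}) + sum T (p - {z. fst z \<in> N})"
        using finp by (rule sum.Int_Diff)
      finally have split: "sum (\<lambda>(x,k). measure lborel k *\<^sub>R g x) p - (h b - h a)
          = sum T (p \<inter> {z. fst z \<in> N}) + sum T (p - {z. fst z \<in> N})" .
      have T1: "\<bar>T z\<bar> \<le> \<eta> * measure lborel (snd z)" if z: "z \<in> p - {z. fst z \<in> N}" for z
      proof -
        obtain x K where zx: "z = (x,K)" by (cases z)
        have xK: "(x,K) \<in> p" and xN: "x \<notin> N" using z zx by auto
        note ti = tag_interval[OF p xK]
        have "x \<in> {a..b}" using ti by auto
        have sub: "K \<subseteq> ball x (d x)" using fine xK by (auto simp: fine_def)
        have "Inf K \<in> K" "Sup K \<in> K" using ti by (metis atLeastAtMost_iff order.refl order_trans)+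
        then have du: "\<bar>Inf K - x\<bar> < d x" and dv: "\<bar>Sup K - x\<bar> < d x"
          using sub by (auto simp: dist_real_def abs_minus_commute)
        have 1: "\<bar>h (Inf K) - h x - (Inf K - x) * h' x\<bar> \<le> \<eta> * \<bar>Inf K - x\<bar>"
          using dder[OF _ du] \<open>x \<in> {a..b}\<close> xN by blast
        have 2: "\<bar>h (Sup K) - h x - (Sup K - x) * h' x\<bar> \<le> \<eta> * \<bar>Sup K - x\<bar>"
          using dder[OF _ dv] \<open>x \<in> {a..b}\<close> xN by blast
        have "T z = (h (Inf K) - h x - (Inf K - x) * h' x) - (h (Sup K) - h x - (Sup K - x) * h' x)"
          using xN by (simp add: T_def zx g_def ti(6) algebra_simps)
        then have "\<bar>T z\<bar> \<le> \<eta> * \<bar>Inf K - x\<bar> + \<eta> * \<bar>Sup K - x\<bar>" using 1 2 by linarith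
        also have "\<dots> = \<eta> * (Sup K - Inf K)" using ti by (simp add: algebra_simps)
        finally show ?thesis using ti zx by simp
      qed
      have sumc: "sum (\<lambda>z. measure lborel (snd z)) p = b - a"
        using additive_tagged_division_1[OF ab p, of "\<lambda>x. x"] tag_interval(6)[OF p]
        by (smt (verit, best) prod.case_eq_if prod.collapse sum.cong)
      have "\<bar>sum T (p - {z. fst z \<in> N})\<bar> \<le> sum (\<lambda>z. \<eta> * measure lborel (snd z)) (p - {z. fst z \<in> N})"
        using T1 by (metis (no_types, lifting) sum_abs order_trans sum_mono)
      also have "\<dots> \<le> sum (\<lambda>z. \<eta> * measure lborel (snd z)) p"
        using finp \<eta> by (intro sum_mono2) auto
      also have "\<dots> = \<eta> * (b - a)" using sumc by (metis sum_distrib_left)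
      also have "\<dots> < e/4" using e ab by (simp add: \<eta>_def field_simps)
      finally have good: "\<bar>sum T (p - {z. fst z \<in> N})\<bar> < e/4" .
      define q where "q = p \<inter> {z. fst z \<in> N}"
      have finq: "finite q" using finp by (simp add: q_def)
      have qp: "q \<subseteq> p" by (auto simp: q_def)
      have Kq: "snd z = {Inf (snd z)..Sup (snd z)}" "a \<le> Inf (snd z)" "Inf (snd z) \<le> Sup (snd z)" "Sup (snd z) \<le> b"
        "measure lborel (snd z) = Sup (snd z) - Inf (snd z)" "interior (snd z) = {Inf (snd z)<..<Sup (snd z)}"
        if "z \<in> q" for z
        using tag_interval[OF p, of "fst z" "snd z"] that by (auto simp: q_def)
      have intq: "interior (snd z) \<inter> interior (snd z') = {}" if "z \<in> q" "z' \<in> q" "z \<noteq> z'" for z z'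
        using tagged_division_ofD(5)[OF p, of "fst z" "snd z" "fst z'" "snd z'"] that by (auto simp: q_def)
      have S1: "sum (\<lambda>z. measure lborel (snd z)) q < \<delta>"
      proof -
        have "sum (\<lambda>z. measure lborel (snd z)) q = sum (\<lambda>z. measure lebesgue (snd z)) q"
        proof (rule sum.cong[OF refl])
          fix z assume "z \<in> q"
          then obtain u v where "snd z = {u..v}" "u \<le> v" using Kq by blast
          then show "measure lborel (snd z) = measure lebesgue (snd z)" by simp
        qed
        also have "\<dots> = measure lebesgue (\<Union>(snd ` q))"
        proof (rule measure_negligible_finite_Union_image[symmetric, OF finq])
          show "snd z \<in> lmeasurable" if "z \<in> q" for z using Kq[OF that] by (metis lmeasurable_cbox box_real(2))
          show "pairwise (\<lambda>z z'. negligible (snd z \<inter> snd z')) q"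
            unfolding pairwise_def
          proof (intro ballI impI)
            fix z z' assume zz: "z \<in> q" "z' \<in> q" "z \<noteq> z'"
            have "snd z \<inter> snd z' \<subseteq> {Inf (snd z), Sup (snd z), Inf (snd z'), Sup (snd z')}"
            proof
              fix y assume y: "y \<in> snd z \<inter> snd z'"
              define u where "u = Inf (snd z)" define v where "v = Sup (snd z)"
              define u' where "u' = Inf (snd z')" define v' where "v' = Sup (snd z')"
              have e1: "snd z = {u..v}" "snd z' = {u'..v'}" "{u<..<v} \<inter> {u'<..<v'} = {}"
                using intq[OF zz] Kq[OF zz(1)] Kq[OF zz(2)] by (simp_all add: u_def v_def u'_def v'_def)
              show "y \<in> {Inf (snd z), Sup (snd z), Inf (snd z'), Sup (snd z')}"
              proof (rule ccontr)
                assume "y \<notin> {Inf (snd z), Sup (snd z), Inf (snd z'), Sup (snd z')}"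
                then have "y \<noteq> u" "y \<noteq> v" "y \<noteq> u'" "y \<noteq> v'" by (auto simp: u_def v_def u'_def v'_def)
                moreover have "y \<in> {u..v}" "y \<in> {u'..v'}" using y e1 by auto
                ultimately have "y \<in> {u<..<v} \<inter> {u'<..<v'}" by auto
                then show False using e1(3) by blast
              qed
            qed
            then show "negligible (snd z \<inter> snd z')"
              by (rule negligible_subset[rotated]) auto
          qed
        qed
        also have "\<dots> \<le> measure lebesgue G"
        proof (rule measure_mono_fmeasurable)
          show "\<Union>(snd ` q) \<subseteq> G"
          proof
            fix y assume "y \<in> \<Union>(snd ` q)"
            then obtain x K where "(x,K) \<in> q" "y \<in> K" by auto
            then have "(x,K) \<in> p" "x \<in> N" "y \<in> K" by (auto simp: q_def)
            then show "y \<in> G" using fineD[OF fine \<open>(x,K) \<in> p\<close>] dG[of x] by blast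
          qed
          show "\<Union>(snd ` q) \<in> sets lebesgue" using Kq finq
            by (intro sets.finite_Union) (auto, metis lmeasurable_cbox box_real(2) fmeasurableD)
        qed (use Glm in auto)
        finally show ?thesis using Gm by linarith
      qed
      obtain \<phi> where \<phi>: "bij_betw \<phi> {0..<card q} q" using ex_bij_betw_nat_finite[OF finq] by blast
      define u where "u i = Inf (snd (\<phi> i))" for i
      define v where "v i = Sup (snd (\<phi> i))" for i
      have \<phi>q: "\<phi> i \<in> q" if "i < card q" for i using \<phi> that by (auto simp: bij_betw_def)
      have reidx: "sum F q = (\<Sum>i<card q. F (\<phi> i))" for F :: "_ \<Rightarrow> real"
        using sum.reindex_bij_betw[OF \<phi>, of F] by (simp add: lessThan_atLeast0)
      have S2: "sum (\<lambda>z. \<bar>f (Sup (snd z)) - f (Inf (snd z))\<bar>) q < e/(2*(B+1))"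
      proof -
        have c1: "\<forall>i<card q. a \<le> u i \<and> u i \<le> v i \<and> v i \<le> b"
        proof (intro allI impI)
          fix i assume "i < card q"
          then show "a \<le> u i \<and> u i \<le> v i \<and> v i \<le> b" using Kq[OF \<phi>q] by (simp add: u_def v_def)
        qed
        have c2: "\<forall>i<card q. \<forall>j<card q. i \<noteq> j \<longrightarrow> {u i<..<v i} \<inter> {u j<..<v j} = {}"
        proof (intro allI impI)
          fix i j assume ij: "i < card q" "j < card q" "i \<noteq> j"
          then have "\<phi> i \<noteq> \<phi> j" using \<phi> by (auto simp: bij_betw_def inj_on_def)
          then show "{u i<..<v i} \<inter> {u j<..<v j} = {}"
            using intq[OF \<phi>q \<phi>q] ij Kq[OF \<phi>q] by (simp add: u_def v_def)
        qed
        have "(\<Sum>i<card q. v i - u i) = (\<Sum>i<card q. measure lborel (snd (\<phi> i)))"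
          using Kq(5)[OF \<phi>q] by (intro sum.cong) (auto simp: u_def v_def)
        also have "\<dots> = sum (\<lambda>z. measure lborel (snd z)) q" using reidx by simp
        finally have c3: "(\<Sum>i<card q. v i - u i) < \<delta>1" using S1 \<delta>_def by linarith
        have "(\<Sum>i<card q. \<bar>f (v i) - f (u i)\<bar>) < e/(2*(B+1))"
          by (rule acd[OF conjI[OF c1 conjI[OF c2 c3]]])
        then show ?thesis using reidx by (simp add: u_def v_def)
      qed
      have "\<bar>sum T q\<bar> \<le> sum (\<lambda>z. \<bar>T z\<bar>) q" by (rule sum_abs)
      also have "\<dots> \<le> sum (\<lambda>z. A * measure lborel (snd z) + B * \<bar>f (Sup (snd z)) - f (Inf (snd z))\<bar>) q"
      proof (rule sum_mono)
        fix z assume z: "z \<in> q"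
        have "T z = - (h (Sup (snd z)) - h (Inf (snd z)))" using z by (auto simp: T_def q_def g_def split: prod.splits)
        then show "\<bar>T z\<bar> \<le> A * measure lborel (snd z) + B * \<bar>f (Sup (snd z)) - f (Inf (snd z))\<bar>"
          using bnd[of "Inf (snd z)" "Sup (snd z)"] Kq[OF z] by simp
      qed
      also have "\<dots> = A * sum (\<lambda>z. measure lborel (snd z)) q + B * sum (\<lambda>z. \<bar>f (Sup (snd z)) - f (Inf (snd z))\<bar>) q"
        by (simp add: sum.distrib sum_distrib_left)
      also have "\<dots> \<le> e/4 + e/2"
      proof (rule add_mono)
        have "A * sum (\<lambda>z. measure lborel (snd z)) q \<le> A * \<delta>" using S1 A by (simp add: mult_left_mono)
        also have "\<dots> \<le> A * (e/(4*(A+1)))" using A by (intro mult_left_mono) (auto simp: \<delta>_def)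
        also have "\<dots> \<le> e/4" using A e by (simp add: field_simps)
        finally show "A * sum (\<lambda>z. measure lborel (snd z)) q \<le> e/4" .
        have "B * sum (\<lambda>z. \<bar>f (Sup (snd z)) - f (Inf (snd z))\<bar>) q \<le> B * (e/(2*(B+1)))"
          using S2 B by (intro mult_left_mono) auto
        also have "\<dots> \<le> e/2" using B e by (simp add: field_simps)
        finally show "B * sum (\<lambda>z. \<bar>f (Sup (snd z)) - f (Inf (snd z))\<bar>) q \<le> e/2" .
      qed
      finally have bad: "\<bar>sum T q\<bar> \<le> e/4 + e/2" .
      show "norm (sum (\<lambda>(x,k). measure lborel k *\<^sub>R g x) p - (h b - h a)) < e"
        using split good bad by (simp add: q_def)
    qed
  qed
  then show ?thesis
    by (rule has_integral_spike[OF N, rotated]) (simp add: g_def)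
qed


lemma ac_sub:
  assumes "absolutely_continuous_on a b f" "a \<le> c" "d \<le> b"
  shows "absolutely_continuous_on c d f"
  unfolding absolutely_continuous_on_def
proof (intro allI impI)
  fix e :: real assume e: "e > 0"
  from assms(1)[unfolded absolutely_continuous_on_def, rule_format, OF e]
  obtain \<delta> where \<delta>: "\<delta> > 0" and H: "\<forall>(n::nat) (u::nat \<Rightarrow> real) (v::nat \<Rightarrow> real). (\<forall>i<n. a \<le> u i \<and> u i \<le> v i \<and> v i \<le> b) \<and>
        (\<forall>i<n. \<forall>j<n. i \<noteq> j \<longrightarrow> {u i<..<v i} \<inter> {u j<..<v j} = {}) \<and>
        (\<Sum>i<n. v i - u i) < \<delta> \<longrightarrow> (\<Sum>i<n. \<bar>f (v i) - f (u i)\<bar>) < e"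
    by blast
  show "\<exists>\<delta>>0. \<forall>(n::nat) (u::nat \<Rightarrow> real) (v::nat \<Rightarrow> real). (\<forall>i<n. c \<le> u i \<and> u i \<le> v i \<and> v i \<le> d) \<and>
        (\<forall>i<n. \<forall>j<n. i \<noteq> j \<longrightarrow> {u i<..<v i} \<inter> {u j<..<v j} = {}) \<and>
        (\<Sum>i<n. v i - u i) < \<delta> \<longrightarrow> (\<Sum>i<n. \<bar>f (v i) - f (u i)\<bar>) < e"
  proof (intro exI[of _ \<delta>] conjI allI impI)
    fix n :: nat and u v :: "nat \<Rightarrow> real"
    assume P: "(\<forall>i<n. c \<le> u i \<and> u i \<le> v i \<and> v i \<le> d) \<and>
        (\<forall>i<n. \<forall>j<n. i \<noteq> j \<longrightarrow> {u i<..<v i} \<inter> {u j<..<v j} = {}) \<and>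
        (\<Sum>i<n. v i - u i) < \<delta>"
    have "\<forall>i<n. a \<le> u i \<and> u i \<le> v i \<and> v i \<le> b"
    proof (intro allI impI)
      fix i assume "i < n"
      then have "c \<le> u i \<and> u i \<le> v i \<and> v i \<le> d" using P by blast
      then show "a \<le> u i \<and> u i \<le> v i \<and> v i \<le> b" using assms(2,3) by linarith
    qed
    then show "(\<Sum>i<n. \<bar>f (v i) - f (u i)\<bar>) < e" using H P by blast
  qed (use \<delta> in auto)
qed

lemma ibp_ac:
  fixes f f' :: "real \<Rightarrow> real"
  assumes ac: "absolutely_continuous_on a b f" and N: "negligible N"
    and der: "\<And>t. t \<in> {a..b} - N \<Longrightarrow> (f has_real_derivative f' t) (at t)"
    and cd: "a \<le> c" "c \<le> d" "d \<le> b"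
  shows "((\<lambda>t. (t - k) * f' t) has_integral ((d - k) * f d - (c - k) * f c - integral {c..d} f)) {c..d}"
proof -
  have fc: "continuous_on {a..b} f" using ac by (rule ac_continuous)
  have "compact (f ` {a..b})" using fc by (intro compact_continuous_image) auto
  then have "bounded (f ` {a..b})" by (rule compact_imp_bounded)
  then obtain M0 where M0': "\<forall>y\<in>f ` {a..b}. \<bar>y\<bar> \<le> M0" unfolding bounded_real by blast
  have M0: "\<And>t. t \<in> {a..b} \<Longrightarrow> \<bar>f t\<bar> \<le> M0" using M0' by blast
  define M where "M = \<bar>M0\<bar>"
  have M: "\<And>t. t \<in> {a..b} \<Longrightarrow> \<bar>f t\<bar> \<le> M" "M \<ge> 0"
  proof -
    show "\<bar>f t\<bar> \<le> M" if "t \<in> {a..b}" for t using M0[OF that] abs_ge_self[of M0] unfolding M_def by linarith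
    show "M \<ge> 0" unfolding M_def by simp
  qed
  define h where "h t = (t - k) * f t" for t
  have "((\<lambda>t. f t + (t - k) * f' t) has_integral (h d - h c)) {c..d}"
  proof (rule ftc_ac[where f=f and N=N and A=M and B="\<bar>c - k\<bar> + \<bar>d - k\<bar>"])
    show "absolutely_continuous_on c d f" using ac_sub[OF ac cd(1) cd(3)] .
    show "negligible N" by fact
    show "(h has_real_derivative f t + (t - k) * f' t) (at t)" if "t \<in> {c..d} - N" for t
    proof -
      have "(f has_real_derivative f' t) (at t)" using der that cd by auto
      then show ?thesis unfolding h_def by (auto intro!: derivative_eq_intros)
    qed
    show "\<bar>h v - h u\<bar> \<le> M * (v - u) + (\<bar>c - k\<bar> + \<bar>d - k\<bar>) * \<bar>f v - f u\<bar>"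
      if uv: "c \<le> u" "u \<le> v" "v \<le> d" for u v
    proof -
      have "h v - h u = (v - u) * f v + (u - k) * (f v - f u)" by (simp add: h_def algebra_simps)
      then have "\<bar>h v - h u\<bar> \<le> \<bar>(v - u) * f v\<bar> + \<bar>(u - k) * (f v - f u)\<bar>" by linarith
      also have "\<dots> = (v - u) * \<bar>f v\<bar> + \<bar>u - k\<bar> * \<bar>f v - f u\<bar>" using uv by (simp add: abs_mult)
      also have "\<dots> \<le> (v - u) * M + (\<bar>c - k\<bar> + \<bar>d - k\<bar>) * \<bar>f v - f u\<bar>"
      proof (rule add_mono)
        show "(v - u) * \<bar>f v\<bar> \<le> (v - u) * M" using M(1)[of v] uv cd by (intro mult_left_mono) auto
        show "\<bar>u - k\<bar> * \<bar>f v - f u\<bar> \<le> (\<bar>c - k\<bar> + \<bar>d - k\<bar>) * \<bar>f v - f u\<bar>"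
          using uv by (intro mult_right_mono) auto
      qed
      finally show ?thesis by (simp add: mult.commute)
    qed
  qed (use cd M in auto)
  moreover have "(f has_integral integral {c..d} f) {c..d}"
    using fc cd by (intro integrable_integral integrable_continuous_real continuous_on_subset[OF fc]) auto
  ultimately have "((\<lambda>t. f t + (t - k) * f' t - f t) has_integral (h d - h c - integral {c..d} f)) {c..d}"
    by (rule has_integral_diff)
  then show ?thesis by (simp add: h_def)
qed

lemma cs_piece:
  fixes D :: "real \<Rightarrow> real"
  assumes cd: "c \<le> d" and s: "s > 0"
    and J: "((\<lambda>t. (t - k) * D t) has_integral J) {c..d}"
    and D2: "(\<lambda>t. (D t)\<^sup>2) integrable_on {c..d}"
  shows "\<bar>J\<bar> \<le> s / 2 * (((d - k) ^ 3 - (c - k) ^ 3) / 3) + 1 / (2 * s) * integral {c..d} (\<lambda>t. (D t)\<^sup>2)"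
proof -
  have P: "((\<lambda>t. (t - k)\<^sup>2) has_integral ((d - k) ^ 3 / 3 - (c - k) ^ 3 / 3)) {c..d}"
  proof (rule fundamental_theorem_of_calculus[OF cd])
    fix t assume "t \<in> {c..d}"
    have "((\<lambda>t. (t - k) ^ 3 / 3) has_real_derivative (t - k)\<^sup>2) (at t within {c..d})"
      by (auto intro!: derivative_eq_intros simp: power2_eq_square)
    then show "((\<lambda>t. (t - k) ^ 3 / 3) has_vector_derivative (t - k)\<^sup>2) (at t within {c..d})"
      by (simp add: has_real_derivative_iff_has_vector_derivative)
  qed
  have R: "((\<lambda>t. s / 2 * (t - k)\<^sup>2 + 1 / (2 * s) * (D t)\<^sup>2) has_integral
      (s / 2 * (((d - k) ^ 3 - (c - k) ^ 3) / 3) + 1 / (2 * s) * integral {c..d} (\<lambda>t. (D t)\<^sup>2))) {c..d}"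
  proof -
    have P2: "((\<lambda>t. (s / 2) * (t - k)\<^sup>2) has_integral ((s / 2) * ((d - k) ^ 3 / 3 - (c - k) ^ 3 / 3))) {c..d}"
      using P by (rule has_integral_mult_right)
    have D3: "((\<lambda>t. (1 / (2 * s)) * (D t)\<^sup>2) has_integral ((1 / (2 * s)) * integral {c..d} (\<lambda>t. (D t)\<^sup>2))) {c..d}"
      using integrable_integral[OF D2] by (rule has_integral_mult_right)
    show ?thesis using has_integral_add[OF P2 D3] by (simp add: diff_divide_distrib)
  qed
  have pw: "\<bar>(t - k) * D t\<bar> \<le> s / 2 * (t - k)\<^sup>2 + 1 / (2 * s) * (D t)\<^sup>2" for t
  proof -
    have "0 \<le> (s * \<bar>t - k\<bar> - \<bar>D t\<bar>)\<^sup>2" by simp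
    then have "2 * s * (\<bar>t - k\<bar> * \<bar>D t\<bar>) \<le> s\<^sup>2 * (t - k)\<^sup>2 + (D t)\<^sup>2"
      by (simp add: power2_eq_square algebra_simps)
    then have "\<bar>t - k\<bar> * \<bar>D t\<bar> \<le> (s\<^sup>2 * (t - k)\<^sup>2 + (D t)\<^sup>2) / (2 * s)"
      using s by (simp add: field_simps)
    also have "\<dots> = s / 2 * (t - k)\<^sup>2 + 1 / (2 * s) * (D t)\<^sup>2"
      using s by (simp add: field_simps power2_eq_square)
    finally show ?thesis by (simp add: abs_mult)
  qed
  have pw1: "(t - k) * D t \<le> s / 2 * (t - k)\<^sup>2 + 1 / (2 * s) * (D t)\<^sup>2" for t
    using pw[of t] abs_ge_self[of "(t - k) * D t"] by linarith
  have pw2: "- ((t - k) * D t) \<le> s / 2 * (t - k)\<^sup>2 + 1 / (2 * s) * (D t)\<^sup>2" for t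
    using pw[of t] abs_ge_minus_self[of "(t - k) * D t"] by linarith
  have "J \<le> s / 2 * (((d - k) ^ 3 - (c - k) ^ 3) / 3) + 1 / (2 * s) * integral {c..d} (\<lambda>t. (D t)\<^sup>2)"
    by (rule has_integral_le[OF J R pw1])
  moreover have "- J \<le> s / 2 * (((d - k) ^ 3 - (c - k) ^ 3) / 3) + 1 / (2 * s) * integral {c..d} (\<lambda>t. (D t)\<^sup>2)"
    by (rule has_integral_le[OF has_integral_neg[OF J] R pw2])
  ultimately show ?thesis by linarith
qed

lemma real_cs:
  fixes X B C :: real
  assumes H: "\<And>s. s > 0 \<Longrightarrow> X \<le> s / 2 * C + 1 / (2 * s) * B" and B: "B \<ge> 0" and C: "C > 0"
  shows "X \<le> sqrt (C * B)"
proof (cases "B > 0")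
  case True
  define s where "s = sqrt B / sqrt C"
  have s: "s > 0" using True C by (simp add: s_def)
  have "X \<le> s / 2 * C + 1 / (2 * s) * B" using H[OF s] .
  also have "\<dots> = sqrt (C * B)"
    using True C by (simp add: s_def field_simps real_sqrt_mult)
  finally show ?thesis .
next
  case False
  then have B0: "B = 0" using B by simp
  show ?thesis
  proof (rule ccontr)
    assume X: "\<not> X \<le> sqrt (C * B)"
    then have X0: "X > 0" using B0 by simp
    have s: "X / C > 0" using X0 C by simp
    have "X \<le> X / C / 2 * C" using H[OF s] B0 by simp
    also have "\<dots> < X" using X0 C by simp
    finally show False by simp
  qed
qed

theorem corollary2p12:
  fixes a b :: real and f f' :: "real \<Rightarrow> real"
  assumes "a < b"
    and "absolutely_continuous_on a b f"
    and "AE t in lebesgue. t \<in> {a..b} \<longrightarrow> (f has_real_derivative f' t) (at t)"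
    and "f' \<in> borel_measurable (restrict_space lebesgue {a..b})"
    and "integrable (restrict_space lebesgue {a..b}) (\<lambda>t. (f' t)\<^sup>2)"
    and "\<And>x. x \<in> {a..b} \<Longrightarrow> f (a + b - x) = f x"
    and "x \<in> {a..(a + b) / 2}"
  shows "\<bar>f x - (1 / (b - a)) * (LINT t|restrict_space lebesgue {a..b}. f t)\<bar>
     \<le> (b - a) powr (-1/2)
        * sqrt ((b - a)\<^sup>2 / 48 + (x - (3 * a + b) / 4)\<^sup>2)
        * sqrt ((LINT t|restrict_space lebesgue {a..b}. (f' t)\<^sup>2) - (f b - f a)\<^sup>2 / (b - a))"
proof -
  define L where "L = b - a"
  have L: "L > 0" using assms(1) by (simp add: L_def)
  obtain N where N1: "{t \<in> space lebesgue. \<not> (t \<in> {a..b} \<longrightarrow> (f has_real_derivative f' t) (at t))} \<subseteq> N"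
    and N2: "emeasure lebesgue N = 0" and N3: "N \<in> sets lebesgue"
    using assms(3) by (rule AE_E)
  have N: "negligible N" unfolding negligible_iff_null_sets using N2 N3 by (simp add: null_sets_def)
  have der: "\<And>t. t \<in> {a..b} - N \<Longrightarrow> (f has_real_derivative f' t) (at t)" using N1 by auto
  have ac: "absolutely_continuous_on a b f" by (rule assms(2))
  have fc: "continuous_on {a..b} f" using ac by (rule ac_continuous)
  define m where "m = (a + b) / 2"
  define xb where "xb = a + b - x"
  have x: "a \<le> x" "x \<le> m" using assms(7) by (auto simp: m_def)
  have xb: "m \<le> xb" "xb \<le> b" "x \<le> xb" using x by (auto simp: xb_def m_def)
  have fxb: "f xb = f x" using assms(6)[of x] x by (simp add: xb_def m_def)
  have fba: "f b = f a" using assms(6)[of a] assms(1) by simp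
  have J1: "((\<lambda>t. (t - a) * f' t) has_integral ((x - a) * f x - (a - a) * f a - integral {a..x} f)) {a..x}"
    by (rule ibp_ac[OF ac N der]) (use x xb m_def in auto)
  have J2: "((\<lambda>t. (t - m) * f' t) has_integral ((xb - m) * f xb - (x - m) * f x - integral {x..xb} f)) {x..xb}"
    by (rule ibp_ac[OF ac N der]) (use x xb m_def in auto)
  have J3: "((\<lambda>t. (t - b) * f' t) has_integral ((b - b) * f b - (xb - b) * f xb - integral {xb..b} f)) {xb..b}"
    by (rule ibp_ac[OF ac N der]) (use x xb m_def in auto)
  have D2: "(\<lambda>t. (f' t)\<^sup>2) integrable_on {a..b}"
    using integrable_on_lebesgue_on[OF assms(5)] by simp
  have D2s: "(\<lambda>t. (f' t)\<^sup>2) integrable_on {c..d}" if "a \<le> c" "d \<le> b" for c d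
    using integrable_on_subinterval[OF D2] that by auto
  have fi: "f integrable_on {a..b}" using fc by (rule integrable_continuous_real)
  have fis: "f integrable_on {x..b}" using integrable_on_subinterval[OF fi] x by auto
  have D2x: "(\<lambda>t. (f' t)\<^sup>2) integrable_on {x..b}" using D2s x by auto
  define I where "I = integral {a..b} f"
  define B where "B = integral {a..b} (\<lambda>t. (f' t)\<^sup>2)"
  have Isplit: "integral {a..x} f + integral {x..xb} f + integral {xb..b} f = I"
    using Henstock_Kurzweil_Integration.integral_combine[OF x(1) _ fi] Henstock_Kurzweil_Integration.integral_combine[OF xb(3) xb(2) fis] x xb
    by (simp add: I_def m_def)
  have Bsplit: "integral {a..x} (\<lambda>t. (f' t)\<^sup>2) + integral {x..xb} (\<lambda>t. (f' t)\<^sup>2) + integral {xb..b} (\<lambda>t. (f' t)\<^sup>2) = B"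
    using Henstock_Kurzweil_Integration.integral_combine[OF x(1) _ D2] Henstock_Kurzweil_Integration.integral_combine[OF xb(3) xb(2) D2x] x xb
    by (simp add: B_def m_def)
  have B0: "B \<ge> 0" unfolding B_def by (rule integral_nonneg[OF D2]) simp
  define C where "C = ((x - a) ^ 3 - (a - a) ^ 3) / 3 + ((xb - m) ^ 3 - (x - m) ^ 3) / 3 + ((b - b) ^ 3 - (xb - b) ^ 3) / 3"
  define W where "W = (b - a)\<^sup>2 / 48 + (x - (3 * a + b) / 4)\<^sup>2"
  have CW: "C = L * W"
    unfolding C_def W_def L_def xb_def m_def
    by (simp add: power2_eq_square power3_eq_cube field_simps)
  have W: "W > 0" unfolding W_def using assms(1) by (simp add: add_pos_nonneg)
  have C: "C > 0" using CW L W by simp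
  have ident: "L * f x - I = ((x - a) * f x - (a - a) * f a - integral {a..x} f)
      + ((xb - m) * f xb - (x - m) * f x - integral {x..xb} f)
      + ((b - b) * f b - (xb - b) * f xb - integral {xb..b} f)"
    using Isplit fxb by (simp add: L_def xb_def m_def algebra_simps)
  have main: "\<bar>L * f x - I\<bar> \<le> s / 2 * C + 1 / (2 * s) * B" if s: "s > 0" for s
  proof -
    have 1: "\<bar>(x - a) * f x - (a - a) * f a - integral {a..x} f\<bar> \<le> s / 2 * (((x - a) ^ 3 - (a - a) ^ 3) / 3) + 1 / (2 * s) * integral {a..x} (\<lambda>t. (f' t)\<^sup>2)"
      by (rule cs_piece[OF x(1) s J1 D2s]) (use x xb in auto)
    have 2: "\<bar>(xb - m) * f xb - (x - m) * f x - integral {x..xb} f\<bar> \<le> s / 2 * (((xb - m) ^ 3 - (x - m) ^ 3) / 3) + 1 / (2 * s) * integral {x..xb} (\<lambda>t. (f' t)\<^sup>2)"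
      by (rule cs_piece[OF xb(3) s J2 D2s]) (use x xb in auto)
    have 3: "\<bar>(b - b) * f b - (xb - b) * f xb - integral {xb..b} f\<bar> \<le> s / 2 * (((b - b) ^ 3 - (xb - b) ^ 3) / 3) + 1 / (2 * s) * integral {xb..b} (\<lambda>t. (f' t)\<^sup>2)"
      by (rule cs_piece[OF xb(2) s J3 D2s]) (use x xb in auto)
    have "\<bar>L * f x - I\<bar> \<le> \<bar>(x - a) * f x - (a - a) * f a - integral {a..x} f\<bar>
      + \<bar>(xb - m) * f xb - (x - m) * f x - integral {x..xb} f\<bar>
      + \<bar>(b - b) * f b - (xb - b) * f xb - integral {xb..b} f\<bar>"
      unfolding ident by linarith
    also have "\<dots> \<le> s / 2 * C + 1 / (2 * s) * B"
    proof -
      have eq: "s / 2 * C + 1 / (2 * s) * B = (s / 2 * (((x - a) ^ 3 - (a - a) ^ 3) / 3) + 1 / (2 * s) * integral {a..x} (\<lambda>t. (f' t)\<^sup>2))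
        + (s / 2 * (((xb - m) ^ 3 - (x - m) ^ 3) / 3) + 1 / (2 * s) * integral {x..xb} (\<lambda>t. (f' t)\<^sup>2))
        + (s / 2 * (((b - b) ^ 3 - (xb - b) ^ 3) / 3) + 1 / (2 * s) * integral {xb..b} (\<lambda>t. (f' t)\<^sup>2))"
        unfolding C_def Bsplit[symmetric] by (simp only: distrib_left)
      show ?thesis using 1 2 3 unfolding eq by linarith
    qed
    finally show ?thesis .
  qed
  have cs: "\<bar>L * f x - I\<bar> \<le> sqrt (C * B)" by (rule real_cs[OF main B0 C])
  have LI: "(LINT t|restrict_space lebesgue {a..b}. f t) = I"
    unfolding I_def by (rule lebesgue_integral_eq_integral) (use continuous_imp_integrable_real[OF fc] in auto)
  have LB: "(LINT t|restrict_space lebesgue {a..b}. (f' t)\<^sup>2) = B"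
    unfolding B_def by (rule lebesgue_integral_eq_integral) (use assms(5) in auto)
  have "\<bar>f x - (1 / (b - a)) * I\<bar> = \<bar>L * f x - I\<bar> / L"
    using L by (simp add: L_def field_simps abs_div_pos[symmetric] abs_mult)
  also have "\<dots> \<le> sqrt (C * B) / L" using cs L by (simp add: divide_right_mono)
  also have "\<dots> = (b - a) powr (-1/2) * sqrt W * sqrt B"
  proof -
    have "sqrt (C * B) / L = sqrt L * sqrt W * sqrt B / L" by (simp add: CW real_sqrt_mult)
    also have "\<dots> = sqrt W * sqrt B / sqrt L" using L
      by (simp add: field_simps)
    also have "\<dots> = L powr (-1/2) * sqrt W * sqrt B" using L
      by (simp add: powr_minus_divide powr_half_sqrt)
    finally show ?thesis by (simp add: L_def)
  qed
  finally show ?thesis using fba by (simp add: LI LB W_def)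
qed

end
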